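(* Let $H$ be a cancellative monoid and $r$ an ideal system on $H$ such that $(\mathcal I_r(H),\cdot_r)$ is unit-cancellative. Suppose there are a non-$r$-cancellation ideal $I\in\mathcal I_r(H)$, an atom $J_1$ of $\mathcal I_r(H)$, and an element $J_2\in\mathcal I_r(H)$ that is not an atom of $\mathcal I_r(H)$, such that $I\cdot_r J_1=I\cdot_r J_2$. Then $\mathcal I_r(H)$ is not a transfer Krull monoid.
   Context: Ideal system $r$ on a cancellative monoid $H$: a map $X\mapsto X_r$ on subsets of $H$ with $X\subseteq X_r$; $X\subseteq Y_r\Rightarrow X_r\subseteq Y_r$; $aH\subseteq\{a\}_r$; $aX_r=(aX)_r$. $\mathcal I_r(H)$ is the set of nonempty $r$-ideals ($I_r=I$) with $I\cdot_rJ=(IJ)_r$, a reduced semigroup with identity $H$. $I$ is an $r$-cancellation ideal if $I\cdot_rJ_1=I\cdot_rJ_2$ implies $J_1=J_2$. Monoids are commutative, unit-cancellative, with identity; an atom is a non-unit $u$ with $u=ab\Rightarrow a$ or $b$ a unit. A monoid homomorphism $\theta:H\to B$ is a transfer homomorphism if (T1) $B=\theta(H)B^\times$ and $\theta^{-1}(B^\times)=H^\times$, and (T2) whenever $\theta(u)=bc$ with $u\in H$, $b,c\in B$, there are $v,w\in H$ with $u=vw$, $\theta(v)\in bB^\times$, $\theta(w)\in cB^\times$. A Krull monoid is a cancellative monoid admitting a divisor homomorphism into a factorial monoid. A monoid is transfer Krull if it admits a transfer homomorphism to a Krull monoid. *)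

theory Defs
  imports "HOL-Algebra.Divisibility"
begin

definition cancellative_monoid :: "('a, 'm) monoid_scheme \<Rightarrow> bool" where
  "cancellative_monoid H \<longleftrightarrow> comm_monoid_cancel H"

definition unit_cancellative :: "('a, 'm) monoid_scheme \<Rightarrow> bool" where
  "unit_cancellative H \<longleftrightarrow>
     (\<forall>a\<in>carrier H. \<forall>b\<in>carrier H.
        (a = a \<otimes>\<^bsub>H\<^esub> b \<or> a = b \<otimes>\<^bsub>H\<^esub> a) \<longrightarrow> b \<in> Units H)"

definition atom :: "('a, 'm) monoid_scheme \<Rightarrow> 'a \<Rightarrow> bool" where
  "atom H u \<longleftrightarrow> u \<in> carrier H \<and> u \<notin> Units H \<and>
     (\<forall>a\<in>carrier H. \<forall>b\<in>carrier H. u = a \<otimes>\<^bsub>H\<^esub> b \<longrightarrow> a \<in> Units H \<or> b \<in> Units H)"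

definition set_mult :: "('a, 'm) monoid_scheme \<Rightarrow> 'a set \<Rightarrow> 'a set \<Rightarrow> 'a set" where
  "set_mult H X Y = {x \<otimes>\<^bsub>H\<^esub> y | x y. x \<in> X \<and> y \<in> Y}"

definition ideal_system :: "('a, 'm) monoid_scheme \<Rightarrow> ('a set \<Rightarrow> 'a set) \<Rightarrow> bool" where
  "ideal_system H r \<longleftrightarrow>
     (\<forall>X. X \<subseteq> carrier H \<longrightarrow> X \<subseteq> r X \<and> r X \<subseteq> carrier H) \<and>
     (\<forall>X Y. X \<subseteq> carrier H \<longrightarrow> Y \<subseteq> carrier H \<longrightarrow> X \<subseteq> r Y \<longrightarrow> r X \<subseteq> r Y) \<and>
     (\<forall>a\<in>carrier H. set_mult H {a} (carrier H) \<subseteq> r {a}) \<and>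
     (\<forall>a\<in>carrier H. \<forall>X. X \<subseteq> carrier H \<longrightarrow>
        set_mult H {a} (r X) = r (set_mult H {a} X))"

definition r_ideals :: "('a, 'm) monoid_scheme \<Rightarrow> ('a set \<Rightarrow> 'a set) \<Rightarrow> 'a set set" where
  "r_ideals H r = {I. I \<subseteq> carrier H \<and> I \<noteq> {} \<and> r I = I}"

definition r_ideal_monoid :: "('a, 'm) monoid_scheme \<Rightarrow> ('a set \<Rightarrow> 'a set) \<Rightarrow> 'a set monoid" where
  "r_ideal_monoid H r =
     \<lparr>carrier = r_ideals H r, mult = (\<lambda>I J. r (set_mult H I J)), one = carrier H\<rparr>"

definition r_cancellation_ideal :: "('a, 'm) monoid_scheme \<Rightarrow> ('a set \<Rightarrow> 'a set) \<Rightarrow> 'a set \<Rightarrow> bool" where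
  "r_cancellation_ideal H r I \<longleftrightarrow>
     (\<forall>J1\<in>r_ideals H r. \<forall>J2\<in>r_ideals H r.
        r (set_mult H I J1) = r (set_mult H I J2) \<longrightarrow> J1 = J2)"

definition monoid_homomorphism ::
  "('a, 'm) monoid_scheme \<Rightarrow> ('b, 'n) monoid_scheme \<Rightarrow> ('a \<Rightarrow> 'b) \<Rightarrow> bool" where
  "monoid_homomorphism H B \<theta> \<longleftrightarrow>
     (\<forall>x\<in>carrier H. \<theta> x \<in> carrier B) \<and> \<theta> \<one>\<^bsub>H\<^esub> = \<one>\<^bsub>B\<^esub> \<and>
     (\<forall>x\<in>carrier H. \<forall>y\<in>carrier H. \<theta> (x \<otimes>\<^bsub>H\<^esub> y) = \<theta> x \<otimes>\<^bsub>B\<^esub> \<theta> y)"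

definition transfer_hom ::
  "('a, 'm) monoid_scheme \<Rightarrow> ('b, 'n) monoid_scheme \<Rightarrow> ('a \<Rightarrow> 'b) \<Rightarrow> bool" where
  "transfer_hom H B \<theta> \<longleftrightarrow>
     monoid_homomorphism H B \<theta> \<and>
     (\<forall>b\<in>carrier B. \<exists>u\<in>carrier H. \<exists>e\<in>Units B. b = \<theta> u \<otimes>\<^bsub>B\<^esub> e) \<and>
     {u \<in> carrier H. \<theta> u \<in> Units B} = Units H \<and>
     (\<forall>u\<in>carrier H. \<forall>b\<in>carrier B. \<forall>c\<in>carrier B. \<theta> u = b \<otimes>\<^bsub>B\<^esub> c \<longrightarrow>
        (\<exists>v\<in>carrier H. \<exists>w\<in>carrier H. u = v \<otimes>\<^bsub>H\<^esub> w \<and>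
           (\<exists>e\<in>Units B. \<theta> v = b \<otimes>\<^bsub>B\<^esub> e) \<and> (\<exists>e\<in>Units B. \<theta> w = c \<otimes>\<^bsub>B\<^esub> e)))"

definition divisor_hom ::
  "('a, 'm) monoid_scheme \<Rightarrow> ('b, 'n) monoid_scheme \<Rightarrow> ('a \<Rightarrow> 'b) \<Rightarrow> bool" where
  "divisor_hom H F \<phi> \<longleftrightarrow>
     monoid_homomorphism H F \<phi> \<and>
     (\<forall>a\<in>carrier H. \<forall>b\<in>carrier H. \<phi> a divides\<^bsub>F\<^esub> \<phi> b \<longrightarrow> a divides\<^bsub>H\<^esub> b)"

(* Krull monoid: cancellative monoid with a divisor homomorphism into a factorial monoid.
   The factorial monoid lives in a type 'c, given explicitly by TYPE('c). *)
definition krull_monoid :: "'c itself \<Rightarrow> ('b, 'n) monoid_scheme \<Rightarrow> bool" where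
  "krull_monoid (_ :: 'c itself) B \<longleftrightarrow> cancellative_monoid B \<and>
     (\<exists>(F :: 'c monoid) \<phi>. factorial_monoid F \<and> divisor_hom B F \<phi>)"

(* transfer Krull, with the Krull monoid in type 'b and its factorial monoid in type 'c *)
definition transfer_krull :: "'b itself \<Rightarrow> 'c itself \<Rightarrow> ('a, 'm) monoid_scheme \<Rightarrow> bool" where
  "transfer_krull (_ :: 'b itself) (tc :: 'c itself) H \<longleftrightarrow>
     (\<exists>(B :: 'b monoid) \<theta>. krull_monoid tc B \<and> transfer_hom H B \<theta>)"

end

theory Submission
  imports Defs
begin

theorem lemma4p8:
  fixes H :: "'a monoid" and r :: "'a set \<Rightarrow> 'a set"
    and I J1 J2 :: "'a set"
  assumes "cancellative_monoid H"
    and "ideal_system H r"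
    and "unit_cancellative (r_ideal_monoid H r)"
    and "I \<in> r_ideals H r" and "\<not> r_cancellation_ideal H r I"
    and "atom (r_ideal_monoid H r) J1"
    and "J2 \<in> r_ideals H r" and "\<not> atom (r_ideal_monoid H r) J2"
    and "r (set_mult H I J1) = r (set_mult H I J2)"
  shows "\<not> transfer_krull TYPE('b) TYPE('c) (r_ideal_monoid H r)"
proof
  let ?M = "r_ideal_monoid H r"
  assume "transfer_krull TYPE('b) TYPE('c) ?M"
  then obtain B :: "'b monoid" and \<theta> where kB: "krull_monoid TYPE('c) B"
    and tr: "transfer_hom ?M B \<theta>"
    unfolding transfer_krull_def by blast
  from kB have cB: "comm_monoid_cancel B"
    unfolding krull_monoid_def cancellative_monoid_def by blast
  then interpret B: comm_monoid_cancel B .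
  have hom: "monoid_homomorphism ?M B \<theta>" using tr unfolding transfer_hom_def by blast
  have uni: "{u \<in> carrier ?M. \<theta> u \<in> Units B} = Units ?M" using tr unfolding transfer_hom_def by blast
  have T2: "\<And>u b c. u \<in> carrier ?M \<Longrightarrow> b \<in> carrier B \<Longrightarrow> c \<in> carrier B \<Longrightarrow> \<theta> u = b \<otimes>\<^bsub>B\<^esub> c \<Longrightarrow>
        (\<exists>v\<in>carrier ?M. \<exists>w\<in>carrier ?M. u = v \<otimes>\<^bsub>?M\<^esub> w \<and>
           (\<exists>e\<in>Units B. \<theta> v = b \<otimes>\<^bsub>B\<^esub> e) \<and> (\<exists>e\<in>Units B. \<theta> w = c \<otimes>\<^bsub>B\<^esub> e))"
    using tr unfolding transfer_hom_def by blast
  have car: "\<And>x. x \<in> carrier ?M \<Longrightarrow> \<theta> x \<in> carrier B" using hom unfolding monoid_homomorphism_def by blast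
  have mul: "\<And>x y. x \<in> carrier ?M \<Longrightarrow> y \<in> carrier ?M \<Longrightarrow> \<theta> (x \<otimes>\<^bsub>?M\<^esub> y) = \<theta> x \<otimes>\<^bsub>B\<^esub> \<theta> y"
    using hom unfolding monoid_homomorphism_def by blast
  have J1c: "J1 \<in> carrier ?M" and J1nu: "J1 \<notin> Units ?M"
    and J1at: "\<And>a b. a \<in> carrier ?M \<Longrightarrow> b \<in> carrier ?M \<Longrightarrow> J1 = a \<otimes>\<^bsub>?M\<^esub> b \<Longrightarrow> a \<in> Units ?M \<or> b \<in> Units ?M"
    using assms(6) unfolding atom_def by blast+
  have Ic: "I \<in> carrier ?M" and J2c: "J2 \<in> carrier ?M" using assms(4,7) by (simp_all add: r_ideal_monoid_def)
  have "I \<otimes>\<^bsub>?M\<^esub> J1 = I \<otimes>\<^bsub>?M\<^esub> J2" using assms(9) by (simp add: r_ideal_monoid_def)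
  hence "\<theta> I \<otimes>\<^bsub>B\<^esub> \<theta> J1 = \<theta> I \<otimes>\<^bsub>B\<^esub> \<theta> J2" using mul Ic J1c J2c by metis
  hence eq: "\<theta> J1 = \<theta> J2" using B.l_cancel car Ic J1c J2c by blast
  have uB: "\<And>x. x \<in> carrier ?M \<Longrightarrow> \<theta> x \<in> Units B \<longleftrightarrow> x \<in> Units ?M" using uni by blast
  have "\<theta> J1 \<notin> Units B" using uB J1c J1nu by blast
  hence J2nu: "J2 \<notin> Units ?M" using eq uB J2c by simp
  then obtain a b where ab: "a \<in> carrier ?M" "b \<in> carrier ?M" "J2 = a \<otimes>\<^bsub>?M\<^esub> b"
    "a \<notin> Units ?M" "b \<notin> Units ?M"
    using assms(8) J2c unfolding atom_def by blast
  have "\<theta> J1 = \<theta> a \<otimes>\<^bsub>B\<^esub> \<theta> b" using eq ab mul by simp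
  then obtain v w where vw: "v \<in> carrier ?M" "w \<in> carrier ?M" "J1 = v \<otimes>\<^bsub>?M\<^esub> w"
    and ev: "\<exists>e\<in>Units B. \<theta> v = \<theta> a \<otimes>\<^bsub>B\<^esub> e" and ew: "\<exists>e\<in>Units B. \<theta> w = \<theta> b \<otimes>\<^bsub>B\<^esub> e"
    using T2[OF J1c car[OF ab(1)] car[OF ab(2)]] by blast
  have "v \<in> Units ?M \<or> w \<in> Units ?M" using J1at vw by blast
  thus False
  proof
    assume "v \<in> Units ?M"
    hence "\<theta> v \<in> Units B" using uB vw by blast
    moreover obtain e where "e \<in> Units B" "\<theta> v = \<theta> a \<otimes>\<^bsub>B\<^esub> e" using ev by blast
    ultimately have "\<theta> a \<otimes>\<^bsub>B\<^esub> e \<in> Units B" by simp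
    hence "\<theta> a \<in> Units B" using B.unit_factor car ab \<open>e \<in> Units B\<close> B.Units_closed by blast
    thus False using uB ab by blast
  next
    assume "w \<in> Units ?M"
    hence "\<theta> w \<in> Units B" using uB vw by blast
    moreover obtain e where "e \<in> Units B" "\<theta> w = \<theta> b \<otimes>\<^bsub>B\<^esub> e" using ew by blast
    ultimately have "\<theta> b \<otimes>\<^bsub>B\<^esub> e \<in> Units B" by simp
    hence "\<theta> b \<in> Units B" using B.unit_factor car ab \<open>e \<in> Units B\<close> B.Units_closed by blast
    thus False using uB ab by blast
  qed
qed

end
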